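(* Let $f$ be a probability density on $\mathbb{R}$ which is a scale mixture of normals, let $G$ be an absolutely continuous cumulative distribution function on $\mathbb{R}$ symmetric about $0$, and let $\omega$ be an odd function with $\omega(x)>0$ for $x>0$. Let $\mathbf{x}=(x_1,\dots,x_n)$ be an i.i.d. sample from the density $$s_{f;G}(x;\mu,\sigma,\lambda)=\frac{2}{\sigma}f\left(\frac{x-\mu}{\sigma}\right)G\left(\lambda\,\omega\left(\frac{x-\mu}{\sigma}\right)\right),\quad x\in\mathbb{R},$$ with $\mu\in\mathbb{R}$, $\sigma>0$, $\lambda\in\mathbb{R}$, and consider the (improper) prior $\pi(\mu,\sigma,\lambda)=p(\lambda)/\sigma$ on $\mathbb{R}\times(0,\infty)\times\mathbb{R}$, where $p$ is a proper probability density on $\mathbb{R}$. Then the posterior distribution of $(\mu,\sigma,\lambda)$ is proper, i.e. $\int_{\mathbb{R}}\int_0^\infty\int_{\mathbb{R}}\prod_{j=1}^n s_{f;G}(x_j;\mu,\sigma,\lambda)\,\frac{p(\lambda)}{\sigma}\,d\mu\,d\sigma\,d\lambda<\infty$, provided $n\ge 2$ and all the observations $x_1,\dots,x_n$ are distinct.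
   Context: A density $f$ on $\mathbb{R}$ is a scale mixture of normals if $f(x)=\int_{(0,\infty)}\frac{1}{\tau}\phi\left(\frac{x}{\tau}\right)\,dH(\tau)$ for some probability distribution $H$ on $(0,\infty)$, where $\phi$ is the standard normal density (e.g. normal, logistic, Laplace, Student-$t$). *)

theory Defs
  imports "HOL-Probability.Probability"
begin

text \<open>Densities are determined up to Lebesgue null sets, and the mixture integral may be
  +\<infinity> at x = 0, so the identity is required almost everywhere (as extended reals).\<close>
definition scale_mixture_of_normals :: "(real \<Rightarrow> real) \<Rightarrow> bool" where
  "scale_mixture_of_normals f \<longleftrightarrow>
     f \<in> borel_measurable borel \<and> (\<forall>x. 0 \<le> f x) \<and>
     (\<exists>H :: real measure. prob_space H \<and> sets H = sets borel \<and> emeasure H {0<..} = 1 \<and>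
        (AE x in lborel. ennreal (f x) =
           (\<integral>\<^sup>+ \<tau>. ennreal (std_normal_density (x / \<tau>) / \<tau>) \<partial>H)))"

definition abs_cont_cdf :: "(real \<Rightarrow> real) \<Rightarrow> bool" where
  "abs_cont_cdf G \<longleftrightarrow>
     (\<exists>M. real_distribution M \<and> absolutely_continuous lborel M \<and> G = cdf M)"

definition prob_density :: "(real \<Rightarrow> real) \<Rightarrow> bool" where
  "prob_density p \<longleftrightarrow> p \<in> borel_measurable borel \<and> (\<forall>x. 0 \<le> p x) \<and>
     (\<integral>\<^sup>+ x. ennreal (p x) \<partial>lborel) = 1"

definition skew_dens ::
  "(real \<Rightarrow> real) \<Rightarrow> (real \<Rightarrow> real) \<Rightarrow> (real \<Rightarrow> real) \<Rightarrow> real \<Rightarrow> real \<Rightarrow> real \<Rightarrow> real \<Rightarrow> real" where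
  "skew_dens f G \<omega> \<mu> \<sigma> l y =
     2 / \<sigma> * f ((y - \<mu>) / \<sigma>) * G (l * \<omega> ((y - \<mu>) / \<sigma>))"

end

theory Submission imports Defs begin

lemma subst_interval:
  fixes k :: "real \<Rightarrow> real" and c A B :: real
  assumes [measurable]: "k \<in> borel_measurable borel" and k0: "\<And>t. 0 \<le> k t" and c: "c > 0"
    and AB: "0 < A" "A \<le> B"
  shows "(\<integral>\<^sup>+\<sigma>. ennreal (k (c/\<sigma>) / \<sigma>^2 * indicator {A..B} \<sigma>) \<partial>lborel)
     \<le> ennreal (1/c) * (\<integral>\<^sup>+t. ennreal (k t) \<partial>lborel)"
proof -
  have deriv: "((\<lambda>s. - c / s) has_real_derivative c / x\<^sup>2) (at x)" if "x \<in> {A..B}" for x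
    using that AB by (auto intro!: derivative_eq_intros simp: power2_eq_square field_simps)
  have cont: "continuous_on {A..B} (\<lambda>x. c / x\<^sup>2)"
    using AB by (intro continuous_intros) auto
  have "(\<integral>\<^sup>+\<sigma>. ennreal (k (c/\<sigma>) / \<sigma>^2 * indicator {A..B} \<sigma>) \<partial>lborel)
      = (\<integral>\<^sup>+\<sigma>. ennreal (k (-(-c/\<sigma>)) / c * (c / \<sigma>^2) * indicator {A..B} \<sigma>) \<partial>lborel)"
    using c by (intro nn_integral_cong) (auto simp: indicator_def)
  also have "\<dots> = (\<integral>\<^sup>+y. ennreal (k (-y) / c * indicator {-c/A..-c/B} y) \<partial>lborel)"
    by (rule nn_integral_substitution[where g="\<lambda>s. -c/s" and f="\<lambda>y. k (-y) / c", symmetric])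
       (use AB c deriv cont in \<open>auto simp: set_borel_measurable_def\<close>)
  also have "\<dots> \<le> (\<integral>\<^sup>+y. ennreal (1/c) * ennreal (k (-y)) \<partial>lborel)"
    using c k0 by (intro nn_integral_mono) (auto simp: indicator_def ennreal_mult' [symmetric])
  also have "\<dots> = ennreal (1/c) * (\<integral>\<^sup>+y. ennreal (k (-y)) \<partial>lborel)"
    by (rule nn_integral_cmult) measurable
  also have "(\<integral>\<^sup>+y. ennreal (k (-y)) \<partial>lborel) = (\<integral>\<^sup>+t. ennreal (k t) \<partial>lborel)"
    using nn_integral_real_affine[of "\<lambda>t. ennreal (k t)" "-1" 0] by simp
  finally show ?thesis .
qed

lemma subst_inv:
  fixes k :: "real \<Rightarrow> real" and c :: real
  assumes [measurable]: "k \<in> borel_measurable borel" and k0: "\<And>t. 0 \<le> k t" and c: "c > 0"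
  shows "(\<integral>\<^sup>+\<sigma>. ennreal (k (c/\<sigma>) / \<sigma>^2 * indicator {0<..} \<sigma>) \<partial>lborel)
     \<le> ennreal (1/c) * (\<integral>\<^sup>+t. ennreal (k t) \<partial>lborel)"
proof -
  define F where "F i \<sigma> = ennreal (k (c/\<sigma>) / \<sigma>^2 * indicator {1/Suc i..Suc i} \<sigma>)" for i :: nat and \<sigma>
  have inc: "incseq F"
  proof (intro incseq_SucI le_funI)
    fix i \<sigma>
    have "1 / real (Suc (Suc i)) \<le> 1 / real (Suc i)" by (simp add: frac_le)
    then show "F i \<sigma> \<le> F (Suc i) \<sigma>"
      unfolding F_def using k0[of "c/\<sigma>"]
      by (intro ennreal_leI mult_left_mono) (auto simp: indicator_def)
  qed
  have "(\<integral>\<^sup>+\<sigma>. ennreal (k (c/\<sigma>) / \<sigma>^2 * indicator {0<..} \<sigma>) \<partial>lborel) \<le> (\<integral>\<^sup>+\<sigma>. (SUP i. F i \<sigma>) \<partial>lborel)"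
  proof (intro nn_integral_mono)
    fix \<sigma> :: real
    show "ennreal (k (c/\<sigma>) / \<sigma>^2 * indicator {0<..} \<sigma>) \<le> (SUP i. F i \<sigma>)"
    proof (cases "\<sigma> > 0")
      case True
      obtain m :: nat where m: "\<sigma> \<le> m" "1/\<sigma> \<le> m"
        using real_arch_simple[of "max \<sigma> (1/\<sigma>)"] by auto
      have "1 / real (Suc m) \<le> \<sigma>"
        using True m by (auto simp: field_simps)
      then have "F m \<sigma> = ennreal (k (c/\<sigma>) / \<sigma>^2 * indicator {0<..} \<sigma>)"
        using True m unfolding F_def by (auto simp: indicator_def)
      then show ?thesis by (metis SUP_upper UNIV_I)
    qed auto
  qed
  also have "\<dots> = (SUP i. (\<integral>\<^sup>+\<sigma>. F i \<sigma> \<partial>lborel))"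
    by (rule nn_integral_monotone_convergence_SUP[OF inc]) (unfold F_def[abs_def], measurable)
  also have "\<dots> \<le> ennreal (1/c) * (\<integral>\<^sup>+t. ennreal (k t) \<partial>lborel)"
    unfolding F_def by (intro SUP_least subst_interval k0 c) (auto simp: field_simps)
  finally show ?thesis .
qed

lemma pair_int_lt:
  fixes h :: "real \<Rightarrow> real" and a b :: real
  assumes [measurable]: "h \<in> borel_measurable borel" and h0: "\<And>t. 0 \<le> h t"
    and hint: "(\<integral>\<^sup>+t. ennreal (h t) \<partial>lborel) < \<infinity>" and ab: "a < b"
  shows "(\<integral>\<^sup>+\<sigma>. (\<integral>\<^sup>+\<mu>. ennreal (h ((a-\<mu>)/\<sigma>) * h ((b-\<mu>)/\<sigma>) / \<sigma>^3) \<partial>lborel) * indicator {0<..} \<sigma> \<partial>lborel) < \<infinity>"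
proof -
  define d where "d = b - a"
  have d: "d > 0" using ab by (simp add: d_def)
  define I where "I = (\<integral>\<^sup>+t. ennreal (h t) \<partial>lborel)"
  have step1: "(\<integral>\<^sup>+\<mu>. ennreal (h ((a-\<mu>)/\<sigma>) * h ((b-\<mu>)/\<sigma>) / \<sigma>^3) \<partial>lborel) * indicator {0<..} \<sigma>
      = (\<integral>\<^sup>+u. ennreal (h (-u) * (h (d/\<sigma> - u) / \<sigma>^2 * indicator {0<..} \<sigma>)) \<partial>lborel)" for \<sigma> :: real
  proof (cases "\<sigma> > 0")
    case True
    have "(\<integral>\<^sup>+\<mu>. ennreal (h ((a-\<mu>)/\<sigma>) * h ((b-\<mu>)/\<sigma>) / \<sigma>^3) \<partial>lborel)
        = ennreal \<bar>\<sigma>\<bar> * (\<integral>\<^sup>+u. ennreal (h ((a-(a + \<sigma>*u))/\<sigma>) * h ((b-(a + \<sigma>*u))/\<sigma>) / \<sigma>^3) \<partial>lborel)"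
      using True by (intro nn_integral_real_affine) auto
    also have "\<dots> = (\<integral>\<^sup>+u. ennreal \<sigma> * ennreal (h ((a-(a + \<sigma>*u))/\<sigma>) * h ((b-(a + \<sigma>*u))/\<sigma>) / \<sigma>^3) \<partial>lborel)"
      using True by (subst nn_integral_cmult) auto
    also have "\<dots> = (\<integral>\<^sup>+u. ennreal (h (-u) * (h (d/\<sigma> - u) / \<sigma>^2 * indicator {0<..} \<sigma>)) \<partial>lborel)"
    proof (intro nn_integral_cong)
      fix u :: real
      have e1: "(a-(a + \<sigma>*u))/\<sigma> = -u" "(b-(a + \<sigma>*u))/\<sigma> = d/\<sigma> - u"
        using True by (auto simp: d_def field_simps)
      show "ennreal \<sigma> * ennreal (h ((a-(a + \<sigma>*u))/\<sigma>) * h ((b-(a + \<sigma>*u))/\<sigma>) / \<sigma>^3)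
          = ennreal (h (-u) * (h (d/\<sigma> - u) / \<sigma>^2 * indicator {0<..} \<sigma>))"
        unfolding e1 using True h0[of "-u"] h0[of "d/\<sigma> - u"]
        by (subst ennreal_mult'[symmetric]) (auto simp: power3_eq_cube power2_eq_square field_simps)
    qed
    finally show ?thesis using True by simp
  qed simp
  have "(\<integral>\<^sup>+\<sigma>. (\<integral>\<^sup>+\<mu>. ennreal (h ((a-\<mu>)/\<sigma>) * h ((b-\<mu>)/\<sigma>) / \<sigma>^3) \<partial>lborel) * indicator {0<..} \<sigma> \<partial>lborel)
     = (\<integral>\<^sup>+\<sigma>. (\<integral>\<^sup>+u. ennreal (h (-u) * (h (d/\<sigma> - u) / \<sigma>^2 * indicator {0<..} \<sigma>)) \<partial>lborel) \<partial>lborel)"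
    by (simp add: step1)
  also have "\<dots> = (\<integral>\<^sup>+u. (\<integral>\<^sup>+\<sigma>. ennreal (h (-u) * (h (d/\<sigma> - u) / \<sigma>^2 * indicator {0<..} \<sigma>)) \<partial>lborel) \<partial>lborel)"
    by (rule lborel_pair.Fubini') measurable
  also have "\<dots> = (\<integral>\<^sup>+u. ennreal (h (-u)) * (\<integral>\<^sup>+\<sigma>. ennreal (h (d/\<sigma> - u) / \<sigma>^2 * indicator {0<..} \<sigma>) \<partial>lborel) \<partial>lborel)"
  proof (intro nn_integral_cong)
    fix u :: real
    have "(\<integral>\<^sup>+\<sigma>. ennreal (h (-u) * (h (d/\<sigma> - u) / \<sigma>^2 * indicator {0<..} \<sigma>)) \<partial>lborel)
       = (\<integral>\<^sup>+\<sigma>. ennreal (h (-u)) * ennreal (h (d/\<sigma> - u) / \<sigma>^2 * indicator {0<..} \<sigma>) \<partial>lborel)"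
      by (rule nn_integral_cong) (rule ennreal_mult'[OF h0])
    also have "\<dots> = ennreal (h (-u)) * (\<integral>\<^sup>+\<sigma>. ennreal (h (d/\<sigma> - u) / \<sigma>^2 * indicator {0<..} \<sigma>) \<partial>lborel)"
      by (rule nn_integral_cmult) measurable
    finally show "(\<integral>\<^sup>+\<sigma>. ennreal (h (-u) * (h (d/\<sigma> - u) / \<sigma>^2 * indicator {0<..} \<sigma>)) \<partial>lborel)
       = ennreal (h (-u)) * (\<integral>\<^sup>+\<sigma>. ennreal (h (d/\<sigma> - u) / \<sigma>^2 * indicator {0<..} \<sigma>) \<partial>lborel)" .
  qed
  also have "\<dots> \<le> (\<integral>\<^sup>+u. ennreal (h (-u)) * (ennreal (1/d) * I) \<partial>lborel)"
  proof (intro nn_integral_mono mult_left_mono)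
    fix u :: real
    have "(\<integral>\<^sup>+\<sigma>. ennreal (h (d/\<sigma> - u) / \<sigma>^2 * indicator {0<..} \<sigma>) \<partial>lborel)
        \<le> ennreal (1/d) * (\<integral>\<^sup>+t. ennreal (h (t - u)) \<partial>lborel)"
      using subst_inv[of "\<lambda>t. h (t - u)" d] d h0 by auto
    also have "(\<integral>\<^sup>+t. ennreal (h (t - u)) \<partial>lborel) = I"
      unfolding I_def using nn_integral_real_affine[of "\<lambda>t. ennreal (h t)" 1 "-u"] by simp
    finally show "(\<integral>\<^sup>+\<sigma>. ennreal (h (d/\<sigma> - u) / \<sigma>^2 * indicator {0<..} \<sigma>) \<partial>lborel) \<le> ennreal (1/d) * I" .
  qed auto
  also have "\<dots> = (\<integral>\<^sup>+u. ennreal (h (-u)) \<partial>lborel) * (ennreal (1/d) * I)"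
    by (rule nn_integral_multc) measurable
  also have "(\<integral>\<^sup>+u. ennreal (h (-u)) \<partial>lborel) = I"
    unfolding I_def using nn_integral_real_affine[of "\<lambda>t. ennreal (h t)" "-1" 0] by simp
  finally have "(\<integral>\<^sup>+\<sigma>. (\<integral>\<^sup>+\<mu>. ennreal (h ((a-\<mu>)/\<sigma>) * h ((b-\<mu>)/\<sigma>) / \<sigma>^3) \<partial>lborel) * indicator {0<..} \<sigma> \<partial>lborel)
     \<le> I * (ennreal (1/d) * I)" .
  also have "\<dots> < \<infinity>" using hint unfolding I_def by (simp add: ennreal_mult_less_top)
  finally show ?thesis .
qed

lemma pair_int:
  fixes h :: "real \<Rightarrow> real" and a b :: real
  assumes [measurable]: "h \<in> borel_measurable borel" and h0: "\<And>t. 0 \<le> h t"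
    and hint: "(\<integral>\<^sup>+t. ennreal (h t) \<partial>lborel) < \<infinity>" and ab: "a \<noteq> b"
  shows "(\<integral>\<^sup>+\<sigma>. (\<integral>\<^sup>+\<mu>. ennreal (h ((a-\<mu>)/\<sigma>) * h ((b-\<mu>)/\<sigma>) / \<sigma>^3) \<partial>lborel) * indicator {0<..} \<sigma> \<partial>lborel) < \<infinity>"
proof (cases "a < b")
  case True then show ?thesis using pair_int_lt[OF assms(1-3)] by blast
next
  case False
  then have "b < a" using ab by auto
  from pair_int_lt[OF assms(1-3) this] show ?thesis by (simp add: mult.commute)
qed

lemma normal_bound:
  fixes y \<tau> :: real assumes "y \<noteq> 0"
  shows "std_normal_density (y/\<tau>) / \<tau> \<le> 1 / \<bar>y\<bar>"
proof (cases "\<tau> > 0")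
  case False
  then have "std_normal_density (y/\<tau>) / \<tau> \<le> 0"
    by (intro divide_nonneg_nonpos) auto
  also have "0 \<le> 1 / \<bar>y\<bar>" by simp
  finally show ?thesis .
next
  case True
  define s where "s = \<bar>y\<bar> / \<tau>"
  have s: "s > 0" using True assms by (simp add: s_def)
  have sq: "(y/\<tau>)^2 = s^2" by (simp add: s_def power2_eq_square field_simps)
  have "s \<le> 1 + s^2/2" using sum_squares_ge_zero[of "s - 1" 0]
    by (simp add: power2_eq_square field_simps)
  also have "\<dots> \<le> exp (s^2/2)" by (rule exp_ge_add_one_self)
  finally have e: "s * exp (- (s^2) / 2) \<le> 1"
    by (simp add: exp_minus field_simps)
  have pi: "1 \<le> sqrt (2*pi)" using pi_gt3 by (simp add: real_le_rsqrt)
  have "std_normal_density (y/\<tau>) / \<tau> = (s * exp (- (s^2) / 2)) / sqrt (2*pi) / \<bar>y\<bar>"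
    unfolding std_normal_density_def sq using True assms by (simp add: s_def field_simps)
  also have "\<dots> \<le> 1 / \<bar>y\<bar>"
    using e pi s assms by (intro divide_right_mono) (auto simp: field_simps intro: order_trans)
  finally show ?thesis .
qed

lemma std_normal_nn_integral: "(\<integral>\<^sup>+x. ennreal (std_normal_density x) \<partial>lborel) = 1"
  by (subst nn_integral_eq_integral) auto

lemma mixture_h:
  assumes "scale_mixture_of_normals f"
  obtains h where "h \<in> borel_measurable borel" "\<And>t. 0 \<le> h t" "\<And>y. y \<noteq> 0 \<Longrightarrow> h y \<le> 1/\<bar>y\<bar>"
    "AE y in lborel. f y = h y" "(\<integral>\<^sup>+t. ennreal (h t) \<partial>lborel) \<le> 1"
proof -
  from assms obtain H :: "real measure" where fm[measurable]: "f \<in> borel_measurable borel"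
    and f0: "\<And>x. 0 \<le> f x" and H: "prob_space H" and sH: "sets H = sets borel"
    and ae: "AE x in lborel. ennreal (f x) = (\<integral>\<^sup>+ \<tau>. ennreal (std_normal_density (x / \<tau>) / \<tau>) \<partial>H)"
    unfolding scale_mixture_of_normals_def by blast
  interpret H: prob_space H by fact
  interpret P: pair_sigma_finite lborel H ..
  have mixb: "(\<integral>\<^sup>+ \<tau>. ennreal (std_normal_density (y / \<tau>) / \<tau>) \<partial>H) \<le> ennreal (1/\<bar>y\<bar>)" if "y \<noteq> 0" for y
  proof -
    have "(\<integral>\<^sup>+ \<tau>. ennreal (std_normal_density (y / \<tau>) / \<tau>) \<partial>H) \<le> (\<integral>\<^sup>+ \<tau>. ennreal (1/\<bar>y\<bar>) \<partial>H)"
      using normal_bound[OF that] by (intro nn_integral_mono ennreal_leI) auto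
    also have "\<dots> = ennreal (1/\<bar>y\<bar>)" by (simp add: H.emeasure_space_1)
    finally show ?thesis .
  qed
  have aeb: "AE y in lborel. y \<noteq> 0 \<longrightarrow> f y \<le> 1/\<bar>y\<bar>"
    using ae
  proof eventually_elim
    case (elim y)
    show ?case
    proof
      assume "y \<noteq> 0"
      with mixb[of y] elim have "ennreal (f y) \<le> ennreal (1/\<bar>y\<bar>)" by simp
      then show "f y \<le> 1/\<bar>y\<bar>" by (simp add: ennreal_le_iff)
    qed
  qed
  define h where "h y = (if y = 0 then 0 else min (f y) (1/\<bar>y\<bar>))" for y
  have hm: "h \<in> borel_measurable borel" unfolding h_def[abs_def] by measurable
  have h0: "\<And>t. 0 \<le> h t" using f0 by (simp add: h_def)
  have hb: "\<And>y. y \<noteq> 0 \<Longrightarrow> h y \<le> 1/\<bar>y\<bar>" by (simp add: h_def)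
  have aeh: "AE y in lborel. f y = h y"
    using aeb AE_lborel_singleton[of 0] by eventually_elim (auto simp: h_def)
  have "(\<integral>\<^sup>+t. ennreal (h t) \<partial>lborel) = (\<integral>\<^sup>+t. ennreal (f t) \<partial>lborel)"
    using aeh by (intro nn_integral_cong_AE) auto
  also have "\<dots> = (\<integral>\<^sup>+t. (\<integral>\<^sup>+ \<tau>. ennreal (std_normal_density (t / \<tau>) / \<tau>) \<partial>H) \<partial>lborel)"
    using ae by (intro nn_integral_cong_AE) auto
  also have "\<dots> = (\<integral>\<^sup>+ \<tau>. (\<integral>\<^sup>+t. ennreal (std_normal_density (t / \<tau>) / \<tau>) \<partial>lborel) \<partial>H)"
  proof (rule P.Fubini'[symmetric])
    have "(\<lambda>(t, \<tau>). ennreal (std_normal_density (t / \<tau>) / \<tau>)) \<in> borel_measurable (borel \<Otimes>\<^sub>M borel)"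
      by measurable
    then show "(\<lambda>(t, \<tau>). ennreal (std_normal_density (t / \<tau>) / \<tau>)) \<in> borel_measurable (lborel \<Otimes>\<^sub>M H)"
      by (subst measurable_cong_sets[OF sets_pair_measure_cong[OF sets_lborel sH] refl])
  qed
  also have "\<dots> \<le> (\<integral>\<^sup>+ \<tau>. 1 \<partial>H)"
  proof (intro nn_integral_mono)
    fix \<tau> :: real
    show "(\<integral>\<^sup>+t. ennreal (std_normal_density (t / \<tau>) / \<tau>) \<partial>lborel) \<le> 1"
    proof (cases "\<tau> > 0")
      case True
      have "(\<integral>\<^sup>+t. ennreal (std_normal_density (t / \<tau>) / \<tau>) \<partial>lborel)
          = ennreal \<bar>\<tau>\<bar> * (\<integral>\<^sup>+u. ennreal (std_normal_density ((0 + \<tau> * u) / \<tau>) / \<tau>) \<partial>lborel)"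
        using True by (intro nn_integral_real_affine) auto
      also have "\<dots> = (\<integral>\<^sup>+u. ennreal \<tau> * ennreal (std_normal_density u / \<tau>) \<partial>lborel)"
        using True by (subst nn_integral_cmult) auto
      also have "\<dots> = (\<integral>\<^sup>+u. ennreal (std_normal_density u) \<partial>lborel)"
        using True by (intro nn_integral_cong) (simp add: ennreal_mult'[symmetric])
      finally show ?thesis by (simp add: std_normal_nn_integral)
    next
      case False
      then have "\<And>t. std_normal_density (t / \<tau>) / \<tau> \<le> 0"
        by (intro divide_nonneg_nonpos) auto
      then have "(\<integral>\<^sup>+t. ennreal (std_normal_density (t / \<tau>) / \<tau>) \<partial>lborel) = 0"
        by (subst nn_integral_cong[where v="\<lambda>_. 0"]) (auto simp: ennreal_eq_0_iff)
      then show ?thesis by simp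
    qed
  qed
  also have "\<dots> = 1" by (simp add: H.emeasure_space_1)
  finally show ?thesis using that hm h0 hb aeh by blast
qed

lemma AE_affine:
  fixes c \<sigma> :: real
  assumes ae: "AE y in lborel. P y" and \<sigma>: "\<sigma> \<noteq> 0"
  shows "AE \<mu> in lborel. P ((c - \<mu>) / \<sigma>)"
proof -
  from ae obtain N where N: "{y \<in> space lborel. \<not> P y} \<subseteq> N" "N \<in> sets lborel" "emeasure lborel N = 0"
    by (auto elim!: AE_E)
  have [measurable]: "N \<in> sets borel" using N(2) by simp
  have "0 = (\<integral>\<^sup>+y. indicator N y \<partial>lborel)" using N(3) by simp
  also have "\<dots> = ennreal \<bar>-1/\<sigma>\<bar> * (\<integral>\<^sup>+\<mu>. indicator N (c/\<sigma> + (-1/\<sigma>) * \<mu>) \<partial>lborel)"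
    using \<sigma> by (intro nn_integral_real_affine) auto
  finally have "(\<integral>\<^sup>+\<mu>. indicator N (c/\<sigma> + (-1/\<sigma>) * \<mu>) \<partial>lborel) = 0"
    using \<sigma> by (simp add: ennreal_mult_eq_top_iff)
  then have "AE \<mu> in lborel. (indicator N (c/\<sigma> + (-1/\<sigma>) * \<mu>) :: ennreal) = 0"
    by (subst (asm) nn_integral_0_iff_AE) auto
  then show ?thesis
  proof eventually_elim
    case (elim \<mu>)
    have "c/\<sigma> + (-1/\<sigma>) * \<mu> = (c - \<mu>) / \<sigma>" by (simp add: diff_divide_distrib)
    with elim N(1) show ?case by (auto simp: indicator_def split: if_splits)
  qed
qed

lemma prod_bound:
  fixes h x :: "_ \<Rightarrow> real" and n :: nat and \<sigma> \<mu> \<delta> :: real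
  assumes h0: "\<And>t. 0 \<le> h t" and hb: "\<And>y. y \<noteq> 0 \<Longrightarrow> h y \<le> 1/\<bar>y\<bar>"
    and \<sigma>: "\<sigma> > 0" and n: "n \<ge> 2" and \<delta>: "\<delta> > 0"
    and sep: "\<And>i j. i < n \<Longrightarrow> j < n \<Longrightarrow> i \<noteq> j \<Longrightarrow> \<delta> \<le> \<bar>x i - x j\<bar>"
  shows "(\<Prod>j<n. 2/\<sigma> * h ((x j - \<mu>)/\<sigma>)) / \<sigma>
     \<le> (\<Sum>(a,b)\<in>{(a,b). a < n \<and> b < n \<and> a \<noteq> b}. 4 * (4/\<delta>)^(n-2) * (h ((x a - \<mu>)/\<sigma>) * h ((x b - \<mu>)/\<sigma>) / \<sigma>^3))"
proof -
  obtain a b where ab: "a < n" "b < n" "a \<noteq> b" and far: "\<And>j. j < n \<Longrightarrow> j \<noteq> a \<Longrightarrow> j \<noteq> b \<Longrightarrow> \<delta>/2 \<le> \<bar>x j - \<mu>\<bar>"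
  proof (cases "\<exists>m<n. \<bar>x m - \<mu>\<bar> < \<delta>/2")
    case True
    then obtain m where m: "m < n" "\<bar>x m - \<mu>\<bar> < \<delta>/2" by blast
    show ?thesis
    proof (rule that[of m "if m = 0 then 1 else 0"])
      fix j assume j: "j < n" "j \<noteq> m"
      have "\<delta> \<le> \<bar>x j - x m\<bar>" using sep[of j m] j m by auto
      then show "\<delta>/2 \<le> \<bar>x j - \<mu>\<bar>" using m by linarith
    qed (use m n in auto)
  next
    case False
    then show ?thesis using n by (intro that[of 0 1]) auto
  qed
  define R where "R = {..<n} - {a, b}"
  have cardR: "card R = n - 2" using ab by (simp add: R_def card_Diff_subset)
  define g where "g j = 2/\<sigma> * h ((x j - \<mu>)/\<sigma>)" for j
  have g0: "0 \<le> g j" for j using h0 \<sigma> by (simp add: g_def)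
  have gR: "g j \<le> 4/\<delta>" if "j \<in> R" for j
  proof -
    have d: "\<delta>/2 \<le> \<bar>x j - \<mu>\<bar>" using far[of j] that by (auto simp: R_def)
    then have ne: "(x j - \<mu>)/\<sigma> \<noteq> 0" using \<delta> \<sigma> by auto
    have "g j \<le> 2/\<sigma> * (1 / \<bar>(x j - \<mu>)/\<sigma>\<bar>)"
      unfolding g_def using hb[OF ne] \<sigma> by (intro mult_left_mono) auto
    also have "\<dots> = 2 / \<bar>x j - \<mu>\<bar>" using \<sigma> by (simp add: abs_divide field_simps)
    also have "\<dots> \<le> 2 / (\<delta>/2)" using d \<delta> by (intro divide_left_mono) (auto intro!: mult_pos_pos)
    finally show ?thesis by simp
  qed
  have eqn: "{..<n} = insert a (insert b R)" using ab by (auto simp: R_def)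
  have "(\<Prod>j<n. g j) = prod g (insert a (insert b R))" by (subst eqn) simp
  also have "\<dots> = g a * g b * prod g R"
    using ab by (simp add: R_def mult.assoc)
  finally have "(\<Prod>j<n. g j) = g a * g b * prod g R" .
  also have "\<dots> \<le> g a * g b * (4/\<delta>)^(n-2)"
  proof -
    have "prod g R \<le> (\<Prod>j\<in>R. 4/\<delta>)" by (intro prod_mono) (use g0 gR in auto)
    then show ?thesis using cardR g0 by (intro mult_left_mono) auto
  qed
  finally have "(\<Prod>j<n. g j) / \<sigma> \<le> g a * g b * (4/\<delta>)^(n-2) / \<sigma>"
    using \<sigma> by (intro divide_right_mono) auto
  also have "\<dots> = 4 * (4/\<delta>)^(n-2) * (h ((x a - \<mu>)/\<sigma>) * h ((x b - \<mu>)/\<sigma>) / \<sigma>^3)"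
    unfolding g_def using \<sigma> by (simp add: power3_eq_cube field_simps)
  also have "\<dots> \<le> (\<Sum>(a,b)\<in>{(a,b). a < n \<and> b < n \<and> a \<noteq> b}. 4 * (4/\<delta>)^(n-2) * (h ((x a - \<mu>)/\<sigma>) * h ((x b - \<mu>)/\<sigma>) / \<sigma>^3))"
  proof -
    have fin: "finite {(a,b). a < n \<and> b < n \<and> a \<noteq> b}"
      by (rule finite_subset[of _ "{..<n} \<times> {..<n}"]) auto
    show ?thesis
      using member_le_sum[OF _ _ fin, of "(a,b)" "\<lambda>(a,b). 4 * (4/\<delta>)^(n-2) * (h ((x a - \<mu>)/\<sigma>) * h ((x b - \<mu>)/\<sigma>) / \<sigma>^3)"]
        ab h0 \<sigma> \<delta> by auto
  qed
  finally show ?thesis by (simp add: g_def)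
qed

theorem theorem2:
  fixes f G \<omega> p :: "real \<Rightarrow> real" and x :: "nat \<Rightarrow> real" and n :: nat
  assumes f: "scale_mixture_of_normals f"
    and G: "abs_cont_cdf G" and G_sym: "\<forall>t. G (- t) = 1 - G t"
    and \<omega>_odd: "\<forall>t. \<omega> (- t) = - \<omega> t" and \<omega>_pos: "\<forall>t>0. \<omega> t > 0"
    and p: "prob_density p"
    and n: "n \<ge> 2"
    and distinct: "inj_on x {..<n}"
  shows "(\<integral>\<^sup>+ l. (\<integral>\<^sup>+ \<sigma>\<in>{0<..}. (\<integral>\<^sup>+ \<mu>.
            ennreal ((\<Prod>j<n. skew_dens f G \<omega> \<mu> \<sigma> l (x j)) * p l / \<sigma>)
          \<partial>lborel) \<partial>lborel) \<partial>lborel) < \<infinity>"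
proof -
  have fm[measurable]: "f \<in> borel_measurable borel" and f0: "\<And>t. 0 \<le> f t"
    using f unfolding scale_mixture_of_normals_def by auto
  obtain h where hm[measurable]: "h \<in> borel_measurable borel" and h0: "\<And>t. 0 \<le> h t"
    and hb: "\<And>y. y \<noteq> 0 \<Longrightarrow> h y \<le> 1/\<bar>y\<bar>" and aeh: "AE y in lborel. f y = h y"
    and hint: "(\<integral>\<^sup>+t. ennreal (h t) \<partial>lborel) \<le> 1"
    using mixture_h[OF f] by blast
  have hint': "(\<integral>\<^sup>+t. ennreal (h t) \<partial>lborel) < \<infinity>"
    using hint by (simp add: order_le_less_trans)
  obtain M where M: "real_distribution M" and GM: "G = cdf M"
    using G unfolding abs_cont_cdf_def by blast
  interpret MM: real_distribution M by fact
  have G01: "0 \<le> G t" "G t \<le> 1" for t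
    unfolding GM using MM.cdf_nonneg MM.cdf_bounded_prob by auto
  have pm[measurable]: "p \<in> borel_measurable borel" and p0: "\<And>t. 0 \<le> p t"
    and pint: "(\<integral>\<^sup>+t. ennreal (p t) \<partial>lborel) = 1"
    using p unfolding prob_density_def by auto
  define D where "D = {\<bar>x i - x j\<bar> | i j. i < n \<and> j < n \<and> i \<noteq> j}"
  have finD: "finite D"
  proof -
    have "D \<subseteq> (\<lambda>(i,j). \<bar>x i - x j\<bar>) ` ({..<n} \<times> {..<n})" unfolding D_def by auto
    then show ?thesis by (rule finite_subset) auto
  qed
  have "\<bar>x 0 - x 1\<bar> \<in> D"
  proof -
    have "0 < n" "1 < n" "(0::nat) \<noteq> 1" using n by auto
    then show ?thesis unfolding D_def by blast
  qed
  then have neD: "D \<noteq> {}" by blast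
  define \<delta> where "\<delta> = Min D"
  have \<delta>: "\<delta> > 0"
    unfolding \<delta>_def using finD neD distinct unfolding D_def inj_on_def by (auto simp: Min_gr_iff)
  have sep: "\<And>i j. i < n \<Longrightarrow> j < n \<Longrightarrow> i \<noteq> j \<Longrightarrow> \<delta> \<le> \<bar>x i - x j\<bar>"
    unfolding \<delta>_def using finD by (intro Min_le) (auto simp: D_def)
  define P where "P = {(a,b). a < n \<and> b < n \<and> a \<noteq> b}"
  have finP: "finite P" unfolding P_def
    by (rule finite_subset[of _ "{..<n} \<times> {..<n}"]) auto
  define C where "C = 4 * (4/\<delta>)^(n-2)"
  have C0: "0 \<le> C" using \<delta> by (simp add: C_def)
  define T where "T a b \<mu> \<sigma> = h ((x a - \<mu>)/\<sigma>) * h ((x b - \<mu>)/\<sigma>) / \<sigma>^3" for a b \<mu> \<sigma>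
  define Pi where "Pi \<mu> \<sigma> = (\<Prod>j<n. 2/\<sigma> * f ((x j - \<mu>)/\<sigma>)) / \<sigma>" for \<mu> \<sigma>
  define Q where "Q = (\<integral>\<^sup>+\<sigma>. (\<integral>\<^sup>+\<mu>. ennreal (Pi \<mu> \<sigma>) \<partial>lborel) * indicator {0<..} \<sigma> \<partial>lborel)"
  have claim1: "(\<integral>\<^sup>+\<mu>. ennreal (Pi \<mu> \<sigma>) \<partial>lborel) * indicator {0<..} \<sigma>
      \<le> (\<Sum>q\<in>P. ennreal C * ((\<integral>\<^sup>+\<mu>. ennreal (T (fst q) (snd q) \<mu> \<sigma>) \<partial>lborel) * indicator {0<..} \<sigma>))" for \<sigma>
  proof (cases "\<sigma> > 0")
    case False then show ?thesis by simp
  next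
    case True
    have ae: "AE \<mu> in lborel. \<forall>j\<in>{..<n}. f ((x j - \<mu>)/\<sigma>) = h ((x j - \<mu>)/\<sigma>)"
      using True by (intro eventually_ball_finite ballI AE_affine[OF aeh]) auto
    have "(\<integral>\<^sup>+\<mu>. ennreal (Pi \<mu> \<sigma>) \<partial>lborel)
        = (\<integral>\<^sup>+\<mu>. ennreal ((\<Prod>j<n. 2/\<sigma> * h ((x j - \<mu>)/\<sigma>)) / \<sigma>) \<partial>lborel)"
      using ae by (intro nn_integral_cong_AE) (auto simp: Pi_def elim!: eventually_mono intro!: prod.cong)
    also have "\<dots> \<le> (\<integral>\<^sup>+\<mu>. (\<Sum>q\<in>P. ennreal C * ennreal (T (fst q) (snd q) \<mu> \<sigma>)) \<partial>lborel)"
    proof (intro nn_integral_mono)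
      fix \<mu>
      have "ennreal ((\<Prod>j<n. 2/\<sigma> * h ((x j - \<mu>)/\<sigma>)) / \<sigma>) \<le> ennreal (\<Sum>q\<in>P. C * T (fst q) (snd q) \<mu> \<sigma>)"
        using prod_bound[OF h0 hb True n \<delta> sep, where \<mu>=\<mu>]
        by (intro ennreal_leI) (simp add: P_def C_def T_def case_prod_beta')
      also have "\<dots> = (\<Sum>q\<in>P. ennreal C * ennreal (T (fst q) (snd q) \<mu> \<sigma>))"
      proof -
        have T0: "0 \<le> T a b \<mu> \<sigma>" for a b using h0 True by (simp add: T_def)
        have "ennreal (\<Sum>q\<in>P. C * T (fst q) (snd q) \<mu> \<sigma>) = (\<Sum>q\<in>P. ennreal (C * T (fst q) (snd q) \<mu> \<sigma>))"
          using C0 T0 by (intro sum_ennreal[symmetric]) auto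
        also have "\<dots> = (\<Sum>q\<in>P. ennreal C * ennreal (T (fst q) (snd q) \<mu> \<sigma>))"
          by (intro sum.cong refl ennreal_mult'[OF C0])
        finally show ?thesis .
      qed
      finally show "ennreal ((\<Prod>j<n. 2/\<sigma> * h ((x j - \<mu>)/\<sigma>)) / \<sigma>) \<le> (\<Sum>q\<in>P. ennreal C * ennreal (T (fst q) (snd q) \<mu> \<sigma>))" .
    qed
    also have "\<dots> = (\<Sum>q\<in>P. ennreal C * (\<integral>\<^sup>+\<mu>. ennreal (T (fst q) (snd q) \<mu> \<sigma>) \<partial>lborel))"
      by (subst nn_integral_sum) (auto simp: T_def intro!: sum.cong nn_integral_cmult)
    finally show ?thesis using True by simp
  qed
  have "Q \<le> (\<integral>\<^sup>+\<sigma>. (\<Sum>q\<in>P. ennreal C * ((\<integral>\<^sup>+\<mu>. ennreal (T (fst q) (snd q) \<mu> \<sigma>) \<partial>lborel) * indicator {0<..} \<sigma>)) \<partial>lborel)"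
    unfolding Q_def by (intro nn_integral_mono claim1)
  also have "\<dots> = (\<Sum>q\<in>P. ennreal C * (\<integral>\<^sup>+\<sigma>. (\<integral>\<^sup>+\<mu>. ennreal (T (fst q) (snd q) \<mu> \<sigma>) \<partial>lborel) * indicator {0<..} \<sigma> \<partial>lborel))"
    by (subst nn_integral_sum) (auto simp: T_def intro!: sum.cong nn_integral_cmult)
  also have "\<dots> < \<infinity>"
  proof -
    have "(\<integral>\<^sup>+\<sigma>. (\<integral>\<^sup>+\<mu>. ennreal (T a b \<mu> \<sigma>) \<partial>lborel) * indicator {0<..} \<sigma> \<partial>lborel) < \<infinity>"
      if "(a,b) \<in> P" for a b
    proof -
      have "x a \<noteq> x b" using that distinct unfolding P_def inj_on_def by auto
      then show ?thesis unfolding T_def using pair_int[OF hm h0 hint'] by blast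
    qed
    then show ?thesis using finP by (auto simp: ennreal_mult_less_top)
  qed
  finally have Qfin: "Q < \<infinity>" .
  have "(\<integral>\<^sup>+ l. (\<integral>\<^sup>+ \<sigma>\<in>{0<..}. (\<integral>\<^sup>+ \<mu>.
            ennreal ((\<Prod>j<n. skew_dens f G \<omega> \<mu> \<sigma> l (x j)) * p l / \<sigma>)
          \<partial>lborel) \<partial>lborel) \<partial>lborel) \<le> (\<integral>\<^sup>+ l. ennreal (p l) * Q \<partial>lborel)"
  proof (intro nn_integral_mono)
    fix l
    have "(\<integral>\<^sup>+ \<sigma>\<in>{0<..}. (\<integral>\<^sup>+ \<mu>. ennreal ((\<Prod>j<n. skew_dens f G \<omega> \<mu> \<sigma> l (x j)) * p l / \<sigma>) \<partial>lborel) \<partial>lborel)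
       \<le> (\<integral>\<^sup>+\<sigma>. ennreal (p l) * ((\<integral>\<^sup>+\<mu>. ennreal (Pi \<mu> \<sigma>) \<partial>lborel) * indicator {0<..} \<sigma>) \<partial>lborel)"
    proof (intro nn_integral_mono)
      fix \<sigma> :: real
      show "(\<integral>\<^sup>+ \<mu>. ennreal ((\<Prod>j<n. skew_dens f G \<omega> \<mu> \<sigma> l (x j)) * p l / \<sigma>) \<partial>lborel) * indicator {0<..} \<sigma>
          \<le> ennreal (p l) * ((\<integral>\<^sup>+\<mu>. ennreal (Pi \<mu> \<sigma>) \<partial>lborel) * indicator {0<..} \<sigma>)"
      proof (cases "\<sigma> > 0")
        case False then show ?thesis by simp
      next
        case True
        have "(\<integral>\<^sup>+ \<mu>. ennreal ((\<Prod>j<n. skew_dens f G \<omega> \<mu> \<sigma> l (x j)) * p l / \<sigma>) \<partial>lborel)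
            \<le> (\<integral>\<^sup>+ \<mu>. ennreal (p l) * ennreal (Pi \<mu> \<sigma>) \<partial>lborel)"
        proof (intro nn_integral_mono)
          fix \<mu>
          have ple: "(\<Prod>j<n. skew_dens f G \<omega> \<mu> \<sigma> l (x j)) \<le> (\<Prod>j<n. 2/\<sigma> * f ((x j - \<mu>)/\<sigma>))"
            unfolding skew_dens_def using True f0 G01
            by (intro prod_mono conjI mult_nonneg_nonneg mult_right_le_one_le) auto
          then have "(\<Prod>j<n. skew_dens f G \<omega> \<mu> \<sigma> l (x j)) * p l / \<sigma> \<le> p l * Pi \<mu> \<sigma>"
          proof -
            from ple have "p l * (\<Prod>j<n. skew_dens f G \<omega> \<mu> \<sigma> l (x j)) / \<sigma> \<le> p l * (\<Prod>j<n. 2/\<sigma> * f ((x j - \<mu>)/\<sigma>)) / \<sigma>"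
              using True p0[of l] by (intro divide_right_mono mult_left_mono) auto
            then show ?thesis unfolding Pi_def by (simp add: mult.commute)
          qed
          then show "ennreal ((\<Prod>j<n. skew_dens f G \<omega> \<mu> \<sigma> l (x j)) * p l / \<sigma>) \<le> ennreal (p l) * ennreal (Pi \<mu> \<sigma>)"
            using p0[of l] by (simp add: ennreal_mult'[symmetric] ennreal_leI)
        qed
        also have "\<dots> = ennreal (p l) * (\<integral>\<^sup>+\<mu>. ennreal (Pi \<mu> \<sigma>) \<partial>lborel)"
          by (rule nn_integral_cmult) (simp add: Pi_def)
        finally show ?thesis using True by simp
      qed
    qed
    also have "\<dots> = ennreal (p l) * Q"
      unfolding Q_def by (rule nn_integral_cmult) (simp add: Pi_def)
    finally show "(\<integral>\<^sup>+ \<sigma>\<in>{0<..}. (\<integral>\<^sup>+ \<mu>. ennreal ((\<Prod>j<n. skew_dens f G \<omega> \<mu> \<sigma> l (x j)) * p l / \<sigma>) \<partial>lborel) \<partial>lborel)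
       \<le> ennreal (p l) * Q" .
  qed
  also have "\<dots> = (\<integral>\<^sup>+ l. ennreal (p l) \<partial>lborel) * Q"
    by (rule nn_integral_multc) measurable
  also have "\<dots> = Q" by (simp add: pint)
  finally show ?thesis using Qfin by (simp add: order_le_less_trans)
qed

end
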